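(* Let $n\ge 1$. If there is a balanced stack of $n$ blocks of length $1$ and weight $1$ achieving overhang $d$, then there is a sequence of at most $n-1$ lossy moves that transforms some distribution $\mu$ with $M_0[\mu]=\mu\{x\le 0\}=n$ and $\mu\{x>0\}=0$ into a distribution $\mu'$ with $\mu'\{x\ge d-1\}\ge 1$.
   Context: Stacks: the table is $B_0=(-\infty,0]\times(-\infty,0]$; block $B_i$ occupies $[x_i,x_i+1]\times[y_i,y_i+h]$, blocks have disjoint interiors; $B_i$ rests on $B_j$ if they intersect and $y_i=y_j+h$ ($B_i$ rests on the table if $B_i\cap B_0\neq\emptyset$). Supporting blocks (or the table) exert upward vertical forces $\ge0$ at points of the contact segments, with equal opposite reactions; each block has weight $1$ acting at horizontal position $x_i+\frac12$. The stack is balanced if forces can be chosen so that for every block the total force and total moment vanish. Overhang is $\max_i(x_i+1)$. A distribution is a finite set $\{(x_1,m_1),\dots,(x_k,m_k)\}$ with $m_i>0$; signed distributions allow arbitrary real $m_i$; $\mu(A)=\sum_{x_i\in A}m_i$; $M_j[\mu]=\sum_i m_ix_i^j$. A move $([a,b],\delta)$ has $b-a=1$ and $\delta$ a signed distribution on $[a,b]$ with $M_0[\delta]=M_1[\delta]=0$. The associated lossy move is $([a,b],\delta^\downarrow)$ with $\delta^\downarrow=\delta-\{(\frac{a+b}2,1)\}$; it can be applied to $\mu$ if $\mu+\delta^\downarrow$ is a distribution, and its result is $\mu+\delta^\downarrow$. *)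

theory Defs
  imports Complex_Main
begin

text \<open>A stack of n blocks of height h: block i (for i in 1..n) occupies
  [x i, x i + 1] x [y i, y i + h].  Index 0 denotes the table
  B_0 = (-inf,0] x (-inf,0].\<close>

definition block :: "real \<Rightarrow> (nat \<Rightarrow> real) \<Rightarrow> (nat \<Rightarrow> real) \<Rightarrow> nat \<Rightarrow> (real \<times> real) set" where
  "block h x y i = {(p, q). x i \<le> p \<and> p \<le> x i + 1 \<and> y i \<le> q \<and> q \<le> y i + h}"

definition table :: "(real \<times> real) set" where
  "table = {(p, q). p \<le> 0 \<and> q \<le> 0}"

definition block_interior :: "real \<Rightarrow> (nat \<Rightarrow> real) \<Rightarrow> (nat \<Rightarrow> real) \<Rightarrow> nat \<Rightarrow> (real \<times> real) set" where
  "block_interior h x y i = {(p, q). x i < p \<and> p < x i + 1 \<and> y i < q \<and> q < y i + h}"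

definition table_interior :: "(real \<times> real) set" where
  "table_interior = {(p, q). p < 0 \<and> q < 0}"

definition valid_stack :: "nat \<Rightarrow> real \<Rightarrow> (nat \<Rightarrow> real) \<Rightarrow> (nat \<Rightarrow> real) \<Rightarrow> bool" where
  "valid_stack n h x y \<longleftrightarrow> h > 0 \<and>
     (\<forall>i\<in>{1..n}. \<forall>j\<in>{1..n}. i \<noteq> j \<longrightarrow> block_interior h x y i \<inter> block_interior h x y j = {}) \<and>
     (\<forall>i\<in>{1..n}. block_interior h x y i \<inter> table_interior = {})"

definition rests_on :: "real \<Rightarrow> (nat \<Rightarrow> real) \<Rightarrow> (nat \<Rightarrow> real) \<Rightarrow> nat \<Rightarrow> nat \<Rightarrow> bool" where
  "rests_on h x y i j \<longleftrightarrow>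
     (if j = 0 then block h x y i \<inter> table \<noteq> {}
      else i \<noteq> j \<and> block h x y i \<inter> block h x y j \<noteq> {} \<and> y i = y j + h)"

definition contact :: "real \<Rightarrow> (nat \<Rightarrow> real) \<Rightarrow> (nat \<Rightarrow> real) \<Rightarrow> nat \<Rightarrow> nat \<Rightarrow> real set" where
  "contact h x y i j =
     (if j = 0 then fst ` (block h x y i \<inter> table)
      else fst ` (block h x y i \<inter> block h x y j))"

text \<open>A force system F: F i j p is the upward force exerted by j (block or table)
  on block i at horizontal position p (block i exerts the opposite force on j).\<close>
definition supp_f :: "(real \<Rightarrow> real) \<Rightarrow> real set" where
  "supp_f f = {p. f p \<noteq> 0}"

definition tot_force :: "(real \<Rightarrow> real) \<Rightarrow> real" where
  "tot_force f = (\<Sum>p\<in>supp_f f. f p)"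

definition tot_moment :: "(real \<Rightarrow> real) \<Rightarrow> real" where
  "tot_moment f = (\<Sum>p\<in>supp_f f. p * f p)"

definition balanced :: "nat \<Rightarrow> real \<Rightarrow> (nat \<Rightarrow> real) \<Rightarrow> (nat \<Rightarrow> real) \<Rightarrow> bool" where
  "balanced n h x y \<longleftrightarrow>
    (\<exists>F :: nat \<Rightarrow> nat \<Rightarrow> real \<Rightarrow> real.
       (\<forall>i j p. F i j p \<ge> 0) \<and>
       (\<forall>i j. finite (supp_f (F i j))) \<and>
       (\<forall>i j p. F i j p \<noteq> 0 \<longrightarrow>
          i \<in> {1..n} \<and> j \<in> {0..n} \<and> rests_on h x y i j \<and> p \<in> contact h x y i j) \<and>
       (\<forall>i\<in>{1..n}.
          (\<Sum>j\<in>{0..n}. tot_force (F i j)) - (\<Sum>k\<in>{1..n}. tot_force (F k i)) - 1 = 0 \<and>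
          (\<Sum>j\<in>{0..n}. tot_moment (F i j)) - (\<Sum>k\<in>{1..n}. tot_moment (F k i))
             - (x i + 1/2) = 0))"

definition overhang :: "nat \<Rightarrow> (nat \<Rightarrow> real) \<Rightarrow> real" where
  "overhang n x = Max ((\<lambda>i. x i + 1) ` {1..n})"

text \<open>A (signed) distribution is represented as a finitely supported function
  real => real (mass at each point); a distribution has nonnegative masses.\<close>
definition signed_distr :: "(real \<Rightarrow> real) \<Rightarrow> bool" where
  "signed_distr \<mu> \<longleftrightarrow> finite {t. \<mu> t \<noteq> 0}"

definition distr :: "(real \<Rightarrow> real) \<Rightarrow> bool" where
  "distr \<mu> \<longleftrightarrow> signed_distr \<mu> \<and> (\<forall>t. \<mu> t \<ge> 0)"

definition measure_of :: "(real \<Rightarrow> real) \<Rightarrow> real set \<Rightarrow> real" where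
  "measure_of \<mu> A = (\<Sum>t\<in>{t\<in>A. \<mu> t \<noteq> 0}. \<mu> t)"

definition moment :: "nat \<Rightarrow> (real \<Rightarrow> real) \<Rightarrow> real" where
  "moment j \<mu> = (\<Sum>t\<in>{t. \<mu> t \<noteq> 0}. \<mu> t * t ^ j)"

definition is_move :: "real \<Rightarrow> (real \<Rightarrow> real) \<Rightarrow> bool" where
  "is_move a \<delta> \<longleftrightarrow> signed_distr \<delta> \<and> (\<forall>t. \<delta> t \<noteq> 0 \<longrightarrow> a \<le> t \<and> t \<le> a + 1) \<and>
     moment 0 \<delta> = 0 \<and> moment 1 \<delta> = 0"

definition lossy :: "real \<Rightarrow> (real \<Rightarrow> real) \<Rightarrow> (real \<Rightarrow> real)" where
  "lossy a \<delta> = (\<lambda>t. \<delta> t - (if t = a + 1/2 then 1 else 0))"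

fun lossy_seq :: "(real \<Rightarrow> real) \<Rightarrow> (real \<times> (real \<Rightarrow> real)) list \<Rightarrow> (real \<Rightarrow> real) \<Rightarrow> bool" where
  "lossy_seq \<mu> [] \<mu>' \<longleftrightarrow> \<mu>' = \<mu>"
| "lossy_seq \<mu> ((a, \<delta>) # ms) \<mu>' \<longleftrightarrow>
     is_move a \<delta> \<and> distr (\<lambda>t. \<mu> t + lossy a \<delta> t) \<and>
     lossy_seq (\<lambda>t. \<mu> t + lossy a \<delta> t) ms \<mu>'"

end

theory Submission
  imports Defs
begin

lemma lossy_seq_snoc:
  "lossy_seq \<mu> (ms @ [(a,\<delta>)]) \<nu> \<longleftrightarrow>
   (\<exists>\<mu>'. lossy_seq \<mu> ms \<mu>' \<and> is_move a \<delta> \<and> distr (\<lambda>t. \<mu>' t + lossy a \<delta> t) \<and>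
          \<nu> = (\<lambda>t. \<mu>' t + lossy a \<delta> t))"
proof (induction ms arbitrary: \<mu>)
  case Nil
  then show ?case by auto
next
  case (Cons p ms)
  obtain a' d' where p: "p = (a', d')" by fastforce
  show ?case using Cons by (auto simp: p)
qed

lemma sum_supp_force:
  assumes "finite A" "supp_f f \<subseteq> A"
  shows "(\<Sum>t\<in>A. f t) = tot_force f"
  unfolding tot_force_def
  by (rule sum.mono_neutral_left[symmetric, OF assms(1,2)]) (auto simp: supp_f_def)

lemma sum_supp_moment:
  assumes "finite A" "supp_f f \<subseteq> A"
  shows "(\<Sum>t\<in>A. t * f t) = tot_moment f"
  unfolding tot_moment_def
  by (rule sum.mono_neutral_left[symmetric, OF assms(1,2)]) (auto simp: supp_f_def)

lemma moment_A:
  assumes "finite A" "{t. \<mu> t \<noteq> 0} \<subseteq> A"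
  shows "moment m \<mu> = (\<Sum>t\<in>A. \<mu> t * t ^ m)"
  unfolding moment_def
  by (rule sum.mono_neutral_left[OF assms(1,2)]) auto

locale stk =
  fixes n :: nat and h :: real and x y :: "nat \<Rightarrow> real" and F :: "nat \<Rightarrow> nat \<Rightarrow> real \<Rightarrow> real"
  assumes hpos: "h > 0"
  and Fnn: "\<And>i j p. F i j p \<ge> 0"
  and Ffin: "\<And>i j. finite (supp_f (F i j))"
  and Fsupp: "\<And>i j p. F i j p \<noteq> 0 \<Longrightarrow>
          i \<in> {1..n} \<and> j \<in> {0..n} \<and> rests_on h x y i j \<and> p \<in> contact h x y i j"
  and Fbal: "\<And>i. i\<in>{1..n} \<Longrightarrow>
          (\<Sum>j\<in>{0..n}. tot_force (F i j)) - (\<Sum>k\<in>{1..n}. tot_force (F k i)) - 1 = 0 \<and>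
          (\<Sum>j\<in>{0..n}. tot_moment (F i j)) - (\<Sum>k\<in>{1..n}. tot_moment (F k i))
             - (x i + 1/2) = 0"
begin

lemma Fpt:
  assumes "F i j p \<noteq> 0"
  shows "x i \<le> p \<and> p \<le> x i + 1 \<and> (j = 0 \<longrightarrow> p \<le> 0) \<and>
         (j \<noteq> 0 \<longrightarrow> x j \<le> p \<and> p \<le> x j + 1 \<and> y i = y j + h \<and> i \<noteq> j)"
proof -
  from Fsupp[OF assms] have r: "rests_on h x y i j" and c: "p \<in> contact h x y i j" by auto
  show ?thesis
  proof (cases "j = 0")
    case True
    then show ?thesis using c by (auto simp: contact_def block_def table_def)
  next
    case False
    then show ?thesis using c r by (auto simp: contact_def block_def rests_on_def)
  qed
qed

lemma Frange: "F i j p \<noteq> 0 \<Longrightarrow> i \<in> {1..n} \<and> j \<in> {0..n}"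
  using Fsupp by blast

lemma Fkk: "F k k p = 0"
proof (rule ccontr)
  assume a: "F k k p \<noteq> 0"
  then have "k \<noteq> 0" using Frange by fastforce
  then show False using Fpt[OF a] by auto
qed

lemma tf_nn: "tot_force (F i j) \<ge> 0"
  unfolding tot_force_def by (rule sum_nonneg) (use Fnn in auto)

definition P :: "real set" where
  "P = (\<Union>i\<in>{0..n}. \<Union>j\<in>{0..n}. supp_f (F i j))"

lemma P_fin: "finite P"
  unfolding P_def using Ffin by auto

lemma inP: "F i j t \<noteq> 0 \<Longrightarrow> t \<in> P"
  unfolding P_def supp_f_def using Frange[of i j t] by fastforce

lemma suppP: "supp_f (F i j) \<subseteq> P"
  using inP by (auto simp: supp_f_def)

definition cut :: "nat set \<Rightarrow> real \<Rightarrow> real" where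
  "cut S t = (\<Sum>i\<in>{1..n}-S. F i 0 t + (\<Sum>j\<in>S. F i j t))"

definition dc :: "nat set \<Rightarrow> bool" where
  "dc S \<longleftrightarrow> S \<subseteq> {1..n} \<and> (\<forall>i\<in>S. \<forall>j p. F i j p \<noteq> 0 \<longrightarrow> j = 0 \<or> j \<in> S)"

lemma cut_nn: "cut S t \<ge> 0"
  unfolding cut_def by (intro sum_nonneg add_nonneg_nonneg) (auto intro: Fnn)

lemma cut_supp: "{t. cut S t \<noteq> 0} \<subseteq> P"
proof
  fix t assume "t \<in> {t. cut S t \<noteq> 0}"
  then have "cut S t \<noteq> 0" by simp
  show "t \<in> P"
  proof (rule ccontr)
    assume "t \<notin> P"
    then have "\<And>i j. F i j t = 0" using inP by blast
    then have "cut S t = 0" unfolding cut_def by simp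
    with \<open>cut S t \<noteq> 0\<close> show False by simp
  qed
qed

lemma cut_distr: "distr (cut S)"
  unfolding distr_def signed_distr_def
  using cut_nn finite_subset[OF cut_supp P_fin] by auto


definition dl :: "nat \<Rightarrow> real \<Rightarrow> real" where
  "dl k t = (\<Sum>i\<in>{1..n}. F i k t) - (\<Sum>j\<in>{0..n}. F k j t) + (if t = x k + 1/2 then 1 else 0)"

lemma lossy_dl: "lossy (x k) (dl k) t = (\<Sum>i\<in>{1..n}. F i k t) - (\<Sum>j\<in>{0..n}. F k j t)"
  by (simp add: lossy_def dl_def)

lemma dl_supp: "{t. dl k t \<noteq> 0} \<subseteq> insert (x k + 1/2) P"
proof
  fix t assume "t \<in> {t. dl k t \<noteq> 0}"
  then have ne: "dl k t \<noteq> 0" by simp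
  show "t \<in> insert (x k + 1/2) P"
  proof (rule ccontr)
    assume "t \<notin> insert (x k + 1/2) P"
    then have "\<And>i j. F i j t = 0" "t \<noteq> x k + 1/2" using inP by blast+
    then have "dl k t = 0" unfolding dl_def by simp
    with ne show False by simp
  qed
qed

lemma sum_moment_lin:
  "(\<Sum>t\<in>A. dl k t * t ^ m) =
     (\<Sum>i\<in>{1..n}. \<Sum>t\<in>A. F i k t * t ^ m) - (\<Sum>j\<in>{0..n}. \<Sum>t\<in>A. F k j t * t ^ m)
     + (\<Sum>t\<in>A. (if t = x k + 1/2 then 1 else 0) * t ^ m)"
proof -
  have "dl k t * t ^ m = (\<Sum>i\<in>{1..n}. F i k t * t ^ m) - (\<Sum>j\<in>{0..n}. F k j t * t ^ m)
     + (if t = x k + 1/2 then 1 else 0) * t ^ m" for t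
    unfolding dl_def by (simp add: left_diff_distrib distrib_right sum_distrib_right)
  then have "(\<Sum>t\<in>A. dl k t * t ^ m) = (\<Sum>t\<in>A. \<Sum>i\<in>{1..n}. F i k t * t ^ m) - (\<Sum>t\<in>A. \<Sum>j\<in>{0..n}. F k j t * t ^ m)
     + (\<Sum>t\<in>A. (if t = x k + 1/2 then 1 else 0) * t ^ m)"
    by (simp add: sum.distrib sum_subtractf)
  then show ?thesis by (simp add: sum.swap[of _ A])
qed

lemma move_dl:
  assumes k: "k \<in> {1..n}"
  shows "is_move (x k) (dl k)"
proof -
  let ?A = "insert (x k + 1/2) P"
  have finA: "finite ?A" using P_fin by simp
  have sA: "{t. dl k t \<noteq> 0} \<subseteq> ?A" by (rule dl_supp)
  have sF: "supp_f (F i j) \<subseteq> ?A" for i j using suppP by blast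
  have c: "(\<Sum>t\<in>?A. (if t = x k + 1/2 then 1 else 0) * t ^ m) = (x k + 1/2) ^ m" for m :: nat
  proof -
    have "(\<Sum>t\<in>?A. (if t = x k + 1/2 then 1 else 0) * t ^ m) = (\<Sum>t\<in>?A. if t = x k + 1/2 then t ^ m else 0)"
      by (rule sum.cong) auto
    then show ?thesis by (simp add: sum.delta[OF finA])
  qed
  have m0: "moment 0 (dl k) = 0"
    using Fbal[OF k] sum_moment_lin[where A="?A" and k=k and m=0]
    by (simp add: moment_A[OF finA sA] c[of 0, simplified] sum_supp_force[OF finA sF])
  have c1: "(\<Sum>t\<in>?A. t * (if t = x k + 1/2 then 1 else 0)) = x k + 1/2"
    using c[of 1] by (simp add: mult.commute)
  have m1: "moment 1 (dl k) = 0"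
    using Fbal[OF k] sum_moment_lin[where A="?A" and k=k and m=1]
    by (simp add: moment_A[OF finA sA] c1 sum_supp_moment[OF finA sF] mult.commute)
  have rng: "x k \<le> t \<and> t \<le> x k + 1" if "dl k t \<noteq> 0" for t
  proof (rule ccontr)
    assume nr: "\<not> (x k \<le> t \<and> t \<le> x k + 1)"
    have "F i k t = 0" for i
    proof (rule ccontr)
      assume "F i k t \<noteq> 0"
      from Fpt[OF this] Frange[OF this] nr k show False by auto
    qed
    moreover have "F k j t = 0" for j using Fpt[of k j t] nr by auto
    moreover have "t \<noteq> x k + 1/2" using nr by auto
    ultimately have "dl k t = 0" unfolding dl_def by simp
    with that show False by simp
  qed
  show ?thesis unfolding is_move_def signed_distr_def
    using m0 m1 rng finite_subset[OF sA finA] by auto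
qed

lemma cut_step:
  assumes dS: "dc S" and k: "k \<in> {1..n}" "k \<notin> S" and dS': "dc (insert k S)"
  shows "cut (insert k S) t = cut S t + lossy (x k) (dl k) t"
proof -
  have finS: "finite S" using dS unfolding dc_def by (meson finite_atLeastAtMost finite_subset)
  let ?T = "{1..n::nat}"
  have e1: "?T - insert k S = (?T - S) - {k}" by auto
  have kin: "k \<in> ?T - S" using k by auto
  have A: "cut (insert k S) t = (\<Sum>i\<in>(?T - S) - {k}. F i 0 t + F i k t + (\<Sum>j\<in>S. F i j t))"
    unfolding cut_def e1 using finS k by (simp add: add.assoc)
  have B: "cut S t = (F k 0 t + (\<Sum>j\<in>S. F k j t)) + (\<Sum>i\<in>(?T - S) - {k}. F i 0 t + (\<Sum>j\<in>S. F i j t))"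
    unfolding cut_def using sum.remove[OF _ kin] by simp
  have C: "(\<Sum>i\<in>?T. F i k t) = (\<Sum>i\<in>(?T - S) - {k}. F i k t)"
  proof (rule sum.mono_neutral_right)
    show "\<forall>i\<in>?T - ((?T - S) - {k}). F i k t = 0"
    proof
      fix i assume i: "i \<in> ?T - ((?T - S) - {k})"
      show "F i k t = 0"
      proof (cases "i = k")
        case True then show ?thesis using Fkk by simp
      next
        case False
        then have "i \<in> S" using i by auto
        then show ?thesis using dS k unfolding dc_def by auto
      qed
    qed
  qed auto
  have D: "(\<Sum>j\<in>{0..n}. F k j t) = F k 0 t + (\<Sum>j\<in>S. F k j t)"
  proof -
    have "(\<Sum>j\<in>{0..n}. F k j t) = (\<Sum>j\<in>insert 0 S. F k j t)"
    proof (rule sum.mono_neutral_right)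
      show "insert 0 S \<subseteq> {0..n}" using dS unfolding dc_def by auto
      show "\<forall>j\<in>{0..n} - insert 0 S. F k j t = 0"
      proof
        fix j assume j: "j \<in> {0..n} - insert 0 S"
        show "F k j t = 0"
        proof (cases "j = k")
          case True then show ?thesis using Fkk by simp
        next
          case False then show ?thesis using dS' j unfolding dc_def by auto
        qed
      qed
    qed auto
    also have "\<dots> = F k 0 t + (\<Sum>j\<in>S. F k j t)"
      using finS dS unfolding dc_def by (subst sum.insert) auto
    finally show ?thesis .
  qed
  show ?thesis unfolding lossy_dl A B C D
    by (simp add: sum.distrib algebra_simps)
qed

lemma reach:
  "finite S \<Longrightarrow> dc S \<Longrightarrow> \<exists>ms. length ms = card S \<and> lossy_seq (cut {}) ms (cut S)"
proof (induction "card S" arbitrary: S)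
  case 0
  then have "S = {}" by simp
  then show ?case by (intro exI[of _ "[]"]) simp
next
  case (Suc m)
  then have ne: "S \<noteq> {}" by auto
  have "Max (y ` S) \<in> y ` S" using Max_in[of "y ` S"] Suc.prems ne by auto
  then obtain k where kS: "k \<in> S" and ky: "y k = Max (y ` S)" by auto
  have yle: "y i \<le> y k" if "i \<in> S" for i using ky that Suc.prems by simp
  let ?S' = "S - {k}"
  have dS: "dc S" by fact
  have dS': "dc ?S'"
    unfolding dc_def
  proof (intro conjI ballI allI impI)
    show "?S' \<subseteq> {1..n}" using dS unfolding dc_def by auto
  next
    fix i j p assume i: "i \<in> ?S'" and F: "F i j p \<noteq> 0"
    then have "j = 0 \<or> j \<in> S" using dS unfolding dc_def by auto
    moreover have "j \<noteq> k"
    proof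
      assume "j = k"
      then have "y i = y k + h" using Fpt[OF F] kS dS unfolding dc_def by auto
      with yle[of i] i hpos show False by auto
    qed
    ultimately show "j = 0 \<or> j \<in> ?S'" by auto
  qed
  have cS': "m = card ?S'" using Suc.hyps(2) kS Suc.prems by simp
  obtain ms where ms: "length ms = card ?S'" "lossy_seq (cut {}) ms (cut ?S')"
    using Suc.hyps(1)[OF cS'] Suc.prems dS' by auto
  have kT: "k \<in> {1..n}" using kS dS unfolding dc_def by auto
  have ins: "insert k ?S' = S" using kS by auto
  have step: "(\<lambda>t. cut ?S' t + lossy (x k) (dl k) t) = cut S"
    using cut_step[OF dS' kT _ ] ins dS by (auto simp: fun_eq_iff)
  show ?case
    apply (rule exI[of _ "ms @ [(x k, dl k)]"])
    using ms step move_dl[OF kT] cut_distr[of S] Suc.hyps(2) kS Suc.prems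
    by (auto simp: lossy_seq_snoc)
qed

lemma total_table: "(\<Sum>i\<in>{1..n}. tot_force (F i 0)) = real n"
proof -
  have "(\<Sum>k\<in>{1..n}. (\<Sum>j\<in>{0..n}. tot_force (F k j)) - (\<Sum>i\<in>{1..n}. tot_force (F i k)) - 1) = 0"
    using Fbal by (simp add: sum.neutral)
  moreover have "\<And>k. (\<Sum>j\<in>{0..n}. tot_force (F k j)) = tot_force (F k 0) + (\<Sum>j\<in>{1..n}. tot_force (F k j))"
  proof -
    fix k
    have "{0..n} = insert 0 {1..n}" by auto
    then show "(\<Sum>j\<in>{0..n}. tot_force (F k j)) = tot_force (F k 0) + (\<Sum>j\<in>{1..n}. tot_force (F k j))"
      by simp
  qed
  ultimately have "(\<Sum>k\<in>{1..n}. tot_force (F k 0)) + (\<Sum>k\<in>{1..n}. \<Sum>j\<in>{1..n}. tot_force (F k j))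
      - (\<Sum>k\<in>{1..n}. \<Sum>i\<in>{1..n}. tot_force (F i k)) - real n = 0"
    by (simp add: sum_subtractf sum.distrib)
  moreover have "(\<Sum>k\<in>{1..n}. \<Sum>j\<in>{1..n}. tot_force (F k j)) = (\<Sum>k\<in>{1..n}. \<Sum>i\<in>{1..n}. tot_force (F i k))"
    by (rule sum.swap)
  ultimately show ?thesis by simp
qed

lemma initial:
  "moment 0 (cut {}) = real n \<and> measure_of (cut {}) {t. t \<le> 0} = real n \<and>
   measure_of (cut {}) {t. t > 0} = 0"
proof -
  have c0: "cut {} t = (\<Sum>i\<in>{1..n}. F i 0 t)" for t unfolding cut_def by simp
  have neg: "t \<le> 0" if "cut {} t \<noteq> 0" for t
  proof (rule ccontr)
    assume "\<not> t \<le> 0"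
    then have "F i 0 t = 0" for i using Fpt[of i 0 t] by auto
    then show False using that c0 by simp
  qed
  have cc: "cut {} = (\<lambda>t. \<Sum>i\<in>{1..n}. F i 0 t)" using c0 by (simp add: fun_eq_iff)
  have m0: "moment 0 (cut {}) = real n"
    using moment_A[OF P_fin cut_supp, of 0 "{}"] 
  proof -
    have "(\<Sum>t\<in>P. \<Sum>i\<in>{1..n}. F i 0 t) = (\<Sum>i\<in>{1..n}. \<Sum>t\<in>P. F i 0 t)" by (rule sum.swap)
    also have "\<dots> = (\<Sum>i\<in>{1..n}. tot_force (F i 0))" using sum_supp_force[OF P_fin suppP] by simp
    finally show ?thesis using moment_A[OF P_fin cut_supp, of 0 "{}"] total_table by (simp add: cc)
  qed
  have "measure_of (cut {}) {t. t \<le> 0} = moment 0 (cut {})"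
    unfolding measure_of_def moment_def using neg by (intro sum.cong) auto
  moreover have "measure_of (cut {}) {t. t > 0} = 0"
    unfolding measure_of_def using neg by (force intro: sum.neutral)
  ultimately show ?thesis using m0 by simp
qed

lemma final:
  assumes b: "b \<in> {1..n}"
  defines "S \<equiv> {k\<in>{1..n}. y k < y b}"
  shows "measure_of (cut S) {t. t \<ge> x b} \<ge> 1"
proof -
  let ?g = "\<lambda>t. \<Sum>j\<in>{0..n}. F b j t"
  have bS: "b \<notin> S" unfolding S_def by simp
  have gle: "?g t \<le> cut S t" for t
  proof -
    have "?g t = (\<Sum>j\<in>insert 0 S. F b j t)"
    proof (rule sum.mono_neutral_right)
      show "insert 0 S \<subseteq> {0..n}" unfolding S_def by auto
      show "\<forall>j\<in>{0..n} - insert 0 S. F b j t = 0"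
      proof
        fix j assume j: "j \<in> {0..n} - insert 0 S"
        show "F b j t = 0"
        proof (rule ccontr)
          assume F: "F b j t \<noteq> 0"
          then have "y b = y j + h" "j \<in> {0..n}" using Fpt[OF F] Frange[OF F] j by auto
          then show False using j hpos unfolding S_def by auto
        qed
      qed
    qed auto
    also have "\<dots> = F b 0 t + (\<Sum>j\<in>S. F b j t)"
      unfolding S_def by (subst sum.insert) auto
    also have "\<dots> \<le> cut S t"
      unfolding cut_def
      by (rule member_le_sum[where f = "\<lambda>i. F i 0 t + (\<Sum>j\<in>S. F i j t)"])
         (use b bS in \<open>auto simp: Fnn sum_nonneg\<close>)
    finally show ?thesis .
  qed
  have gnn: "?g t \<ge> 0" for t by (rule sum_nonneg) (use Fnn in auto)
  let ?B = "{t\<in>{t. t \<ge> x b}. cut S t \<noteq> 0}"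
  have BP: "?B \<subseteq> P" using cut_supp by auto
  have finB: "finite ?B" using finite_subset[OF BP P_fin] .
  have "(\<Sum>t\<in>P. ?g t) = (\<Sum>t\<in>?B. ?g t)"
  proof (rule sum.mono_neutral_right[OF P_fin BP], rule ballI)
    fix t assume t: "t \<in> P - ?B"
    show "?g t = 0"
    proof (rule ccontr)
      assume ne: "?g t \<noteq> 0"
      then obtain j where "F b j t \<noteq> 0" by (meson sum.neutral)
      then have "x b \<le> t" using Fpt by blast
      moreover have "cut S t \<noteq> 0" using gle[of t] gnn[of t] ne by linarith
      ultimately show False using t by auto
    qed
  qed
  also have "\<dots> \<le> (\<Sum>t\<in>?B. cut S t)" by (rule sum_mono) (rule gle)
  finally have le: "(\<Sum>t\<in>P. ?g t) \<le> measure_of (cut S) {t. t \<ge> x b}"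
    unfolding measure_of_def by simp
  have "(\<Sum>t\<in>P. ?g t) = (\<Sum>j\<in>{0..n}. \<Sum>t\<in>P. F b j t)" by (rule sum.swap)
  also have "\<dots> = (\<Sum>j\<in>{0..n}. tot_force (F b j))" using sum_supp_force[OF P_fin suppP] by simp
  also have "\<dots> = 1 + (\<Sum>k\<in>{1..n}. tot_force (F k b))" using Fbal[OF b] by simp
  also have "\<dots> \<ge> 1" using tf_nn by (simp add: sum_nonneg)
  finally show ?thesis using le by simp
qed

end

theorem mainTheorem7:
  fixes n :: nat and h d :: real and x y :: "nat \<Rightarrow> real"
  assumes "n \<ge> 1"
    and "valid_stack n h x y"
    and "balanced n h x y"
    and "overhang n x = d"
  shows "\<exists>\<mu> \<mu>' ms. distr \<mu> \<and> moment 0 \<mu> = real n \<and> measure_of \<mu> {t. t \<le> 0} = real n \<and>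
           measure_of \<mu> {t. t > 0} = 0 \<and> length ms \<le> n - 1 \<and> lossy_seq \<mu> ms \<mu>' \<and>
           measure_of \<mu>' {t. t \<ge> d - 1} \<ge> 1"
proof -
  obtain F where F: "(\<forall>i j p. F i j p \<ge> 0) \<and>
       (\<forall>i j. finite (supp_f (F i j))) \<and>
       (\<forall>i j p. F i j p \<noteq> 0 \<longrightarrow>
          i \<in> {1..n} \<and> j \<in> {0..n} \<and> rests_on h x y i j \<and> p \<in> contact h x y i j) \<and>
       (\<forall>i\<in>{1..n}.
          (\<Sum>j\<in>{0..n}. tot_force (F i j)) - (\<Sum>k\<in>{1..n}. tot_force (F k i)) - 1 = 0 \<and>
          (\<Sum>j\<in>{0..n}. tot_moment (F i j)) - (\<Sum>k\<in>{1..n}. tot_moment (F k i))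
             - (x i + 1/2) = 0)"
    using assms(3) unfolding balanced_def by blast
  interpret stk n h x y F
    apply unfold_locales
    using F assms(2) unfolding valid_stack_def by blast+
  have ne: "(\<lambda>i. x i + 1) ` {1..n} \<noteq> {}" using assms(1) by auto
  have "Max ((\<lambda>i. x i + 1) ` {1..n}) \<in> (\<lambda>i. x i + 1) ` {1..n}"
    using Max_in[OF _ ne] by simp
  then obtain b where b: "b \<in> {1..n}" and bd: "x b + 1 = d"
    using assms(4) unfolding overhang_def by auto
  define S where "S = {k\<in>{1..n}. y k < y b}"
  have dS: "dc S" unfolding dc_def S_def
  proof (intro conjI ballI allI impI)
    fix i j p assume i: "i \<in> {k \<in> {1..n}. y k < y b}" and Fne: "F i j p \<noteq> 0"
    show "j = 0 \<or> j \<in> {k \<in> {1..n}. y k < y b}"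
    proof (cases "j = 0")
      case False
      then have "y i = y j + h" "j \<in> {0..n}" using Fpt[OF Fne] Frange[OF Fne] by auto
      then show ?thesis using False i hpos by auto
    qed simp
  qed auto
  have finS: "finite S" unfolding S_def by simp
  obtain ms where ms: "length ms = card S" "lossy_seq (cut {}) ms (cut S)"
    using reach[OF finS dS] by blast
  have "S \<subseteq> {1..n} - {b}" unfolding S_def by auto
  then have "card S \<le> card ({1..n} - {b})" by (intro card_mono) auto
  also have "\<dots> = n - 1" using b by simp
  finally have len: "length ms \<le> n - 1" using ms by simp
  have fin: "measure_of (cut S) {t. t \<ge> d - 1} \<ge> 1"
  proof -
    have "d - 1 = x b" using bd by simp
    then show ?thesis using final[OF b] unfolding S_def by simp
  qed
  show ?thesis
    using cut_distr[of "{}"] initial ms len fin by blast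
qed

end
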